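(* If $X$ and $X'$ are homotopy equivalent topological spaces, then $\mathrm{TC}_g(X)=\mathrm{TC}_g(X')$; that is, the generalized topological complexity depends only on the homotopy type of the space.
   Context: For a space $X$, let $X^I$ be the space of continuous paths $[0,1]\to X$ with the compact-open topology and $\pi_X:X^I\rightarrow X\times X$, $\pi_X(\alpha)=(\alpha(0),\alpha(1))$. The generalized topological complexity $\mathrm{TC}_g(X)$ is the least nonnegative integer $n$ such that $X\times X$ admits a cover by $n+1$ arbitrary (not necessarily open) subsets $A_0,\dots,A_n$ on each of which there exists a continuous local section $s_i:A_i\to X^I$ of $\pi_X$ (i.e. $\pi_X\circ s_i$ is the inclusion); $\mathrm{TC}_g(X)=\infty$ if no such $n$ exists. *)

theory Defs
  imports "HOL-Analysis.Analysis" "HOL-Library.FuncSet" "HOL-Library.Extended_Nat"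
begin

abbreviation unit_interval_top :: "real topology" where
  "unit_interval_top \<equiv> top_of_set {0..1}"

text \<open>Underlying set of the path space X^I: continuous maps [0,1] -> X,
  represented extensionally (value undefined outside [0,1]).\<close>
definition paths_of :: "'a topology \<Rightarrow> (real \<Rightarrow> 'a) set" where
  "paths_of X = {f. continuous_map unit_interval_top X f \<and> f \<in> extensional {0..1}}"

definition path_space :: "'a topology \<Rightarrow> (real \<Rightarrow> 'a) topology" where
  "path_space X = topology_generated_by
     {{f \<in> paths_of X. f ` K \<subseteq> U} | K U. compactin unit_interval_top K \<and> openin X U}"

definition endpoints :: "(real \<Rightarrow> 'a) \<Rightarrow> 'a \<times> 'a" where
  "endpoints \<alpha> = (\<alpha> 0, \<alpha> 1)"

definition has_local_section :: "'a topology \<Rightarrow> ('a \<times> 'a) set \<Rightarrow> bool" where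
  "has_local_section X A \<longleftrightarrow>
     (\<exists>s. continuous_map (subtopology (prod_topology X X) A) (path_space X) s \<and>
          (\<forall>a\<in>A. endpoints (s a) = a))"

definition tcg_cover :: "'a topology \<Rightarrow> nat \<Rightarrow> bool" where
  "tcg_cover X n \<longleftrightarrow>
     (\<exists>A :: nat \<Rightarrow> ('a \<times> 'a) set.
        (\<Union>i\<le>n. A i) = topspace X \<times> topspace X \<and>
        (\<forall>i\<le>n. has_local_section X (A i)))"

definition TC_g :: "'a topology \<Rightarrow> enat" where
  "TC_g X = (if \<exists>n. tcg_cover X n then enat (LEAST n. tcg_cover X n) else \<infinity>)"

end

theory Submission
  imports Defs
begin

lemma compactin_I: "compactin unit_interval_top K \<longleftrightarrow> compact K \<and> K \<subseteq> {0..1}"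
  by (simp add: compactin_subtopology)

lemma topspace_path_space: "topspace (path_space X) = paths_of X"
proof -
  have "{f \<in> paths_of X. f ` {} \<subseteq> topspace X} = paths_of X" by simp
  moreover have "compactin unit_interval_top {}" by simp
  ultimately have "paths_of X \<in> {{f \<in> paths_of X. f ` K \<subseteq> U} | K U. compactin unit_interval_top K \<and> openin X U}"
    by (intro CollectI exI[of _ "{}"] exI[of _ "topspace X"]) auto
  then show ?thesis unfolding path_space_def topology_generated_by_topspace by blast
qed

lemma cont_into_PS:
  assumes "\<And>x. x \<in> topspace T \<Longrightarrow> h x \<in> paths_of X"
    and "\<And>K U. compact K \<Longrightarrow> K \<subseteq> {0..1} \<Longrightarrow> openin X U \<Longrightarrow> openin T {x \<in> topspace T. h x ` K \<subseteq> U}"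
  shows "continuous_map T (path_space X) h"
  unfolding path_space_def
proof (rule continuous_on_generated_topo)
  fix V assume "V \<in> {{f \<in> paths_of X. f ` K \<subseteq> U} | K U. compactin unit_interval_top K \<and> openin X U}"
  then obtain K U where V: "V = {f \<in> paths_of X. f ` K \<subseteq> U}" and KU: "compact K" "K \<subseteq> {0..1}" "openin X U"
    by (auto simp: compactin_I)
  have "h -` V \<inter> topspace T = {x \<in> topspace T. h x ` K \<subseteq> U}" using assms(1) V by auto
  then show "openin T (h -` V \<inter> topspace T)" using assms(2)[OF KU] by simp
next
  show "h ` topspace T \<subseteq> \<Union> {{f \<in> paths_of X. f ` K \<subseteq> U} | K U. compactin unit_interval_top K \<and> openin X U}"
  proof -
    have "\<Union> {{f \<in> paths_of X. f ` K \<subseteq> U} | K U. compactin unit_interval_top K \<and> openin X U} = paths_of X"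
      using topspace_path_space[of X] unfolding path_space_def topology_generated_by_topspace .
    then show ?thesis using assms(1) by (simp add: image_subset_iff)
  qed
qed

lemma cont_from_PS:
  assumes "continuous_map T (path_space X) h"
  shows "\<And>x. x \<in> topspace T \<Longrightarrow> h x \<in> paths_of X"
    and "\<And>K U. compact K \<Longrightarrow> K \<subseteq> {0..1} \<Longrightarrow> openin X U \<Longrightarrow> openin T {x \<in> topspace T. h x ` K \<subseteq> U}"
proof -
  fix x assume "x \<in> topspace T"
  have "h x \<in> topspace (path_space X)" using continuous_map_image_subset_topspace[OF assms] \<open>x \<in> topspace T\<close> by blast
  then show "h x \<in> paths_of X" by (simp add: topspace_path_space)
next
  fix K :: "real set" and U assume KU: "compact K" "K \<subseteq> {0..1}" "openin X U"
  let ?V = "{f \<in> paths_of X. f ` K \<subseteq> U}"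
  have "openin (path_space X) ?V" unfolding path_space_def
    apply (rule topology_generated_by_Basis) using KU by (auto simp: compactin_I)
  then have "openin T {x \<in> topspace T. h x \<in> ?V}"
    using assms openin_continuous_map_preimage by blast
  moreover have "{x \<in> topspace T. h x \<in> ?V} = {x \<in> topspace T. h x ` K \<subseteq> U}"
    using continuous_map_image_subset_topspace[OF assms] by (auto simp: topspace_path_space)
  ultimately show "openin T {x \<in> topspace T. h x ` K \<subseteq> U}" by simp
qed

lemma paths_ofI:
  assumes "continuous_map unit_interval_top X g"
  shows "restrict g {0..1} \<in> paths_of X"
  unfolding paths_of_def using assms
  by (auto intro: continuous_map_eq)

lemma paths_of_D: "p \<in> paths_of X \<Longrightarrow> continuous_map unit_interval_top X p"
  by (simp add: paths_of_def)

lemma paths_of_img: "p \<in> paths_of X \<Longrightarrow> K \<subseteq> {0..1} \<Longrightarrow> p ` K \<subseteq> topspace X"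
  unfolding paths_of_def continuous_map_def by auto


lemma cont_curry:
  assumes H: "continuous_map (prod_topology unit_interval_top T) X H"
  shows "continuous_map T (path_space X) (\<lambda>x. restrict (\<lambda>t. H(t,x)) {0..1})"
proof (rule cont_into_PS)
  fix x assume x: "x \<in> topspace T"
  have "continuous_map unit_interval_top (prod_topology unit_interval_top T) (\<lambda>t. (t,x))"
    using x by (intro continuous_map_pairedI) (auto simp: continuous_map_const)
  then have "continuous_map unit_interval_top X (\<lambda>t. H(t,x))"
    using continuous_map_compose[OF _ H] by (simp add: o_def)
  then show "restrict (\<lambda>t. H(t,x)) {0..1} \<in> paths_of X" by (rule paths_ofI)
next
  fix K :: "real set" and U assume K: "compact K" "K \<subseteq> {0..1}" and U: "openin X U"
  let ?S = "{x \<in> topspace T. restrict (\<lambda>t. H(t,x)) {0..1} ` K \<subseteq> U}"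
  show "openin T ?S"
  proof (subst openin_subopen, intro ballI)
    fix x assume xS: "x \<in> ?S"
    let ?W = "{z \<in> topspace (prod_topology unit_interval_top T). H z \<in> U}"
    have W: "openin (prod_topology unit_interval_top T) ?W"
      using openin_continuous_map_preimage[OF H U] .
    have cK: "compactin unit_interval_top K" using K by (simp add: compactin_I)
    have x: "x \<in> topspace T" using xS by simp
    have sub: "K \<times> {x} \<subseteq> ?W"
    proof
      fix z assume "z \<in> K \<times> {x}"
      then obtain t where z: "z = (t,x)" "t \<in> K" by auto
      then have "t \<in> {0..1}" using K by auto
      moreover have "H(t,x) \<in> U" using xS z \<open>t \<in> {0..1}\<close> by auto
      ultimately show "z \<in> ?W" using z x by auto
    qed
    obtain U' V where UV: "openin unit_interval_top U'" "openin T V" "K \<subseteq> U'" "x \<in> V" "U' \<times> V \<subseteq> ?W"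
      using tube_lemma_left[OF W cK x sub] by blast
    have "V \<subseteq> ?S"
    proof
      fix y assume y: "y \<in> V"
      have "y \<in> topspace T" using UV(2) y openin_subset by blast
      moreover have "H(t,y) \<in> U" if "t \<in> K" for t using UV(3,5) y that by blast
      ultimately show "y \<in> ?S" using K by auto
    qed
    then show "\<exists>V. openin T V \<and> x \<in> V \<and> V \<subseteq> ?S" using UV by blast
  qed
qed


lemma restrict_img: "K \<subseteq> A \<Longrightarrow> restrict g A ` K = g ` K"
  by (intro image_cong) auto

lemma cont_real_I:
  assumes "continuous_on S f" "f ` S \<subseteq> {0..1}"
  shows "continuous_map (top_of_set S) unit_interval_top f"
  using assms by (simp add: continuous_map_in_subtopology image_subset_iff)

lemma cont_postcomp:
  assumes h: "continuous_map T (path_space X) h" and f: "continuous_map X Y f"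
  shows "continuous_map T (path_space Y) (\<lambda>x. restrict (f \<circ> h x) {0..1})"
proof (rule cont_into_PS)
  fix x assume x: "x \<in> topspace T"
  show "restrict (f \<circ> h x) {0..1} \<in> paths_of Y"
    using paths_ofI continuous_map_compose[OF paths_of_D[OF cont_from_PS(1)[OF h x]] f] by blast
next
  fix K :: "real set" and U assume K: "compact K" "K \<subseteq> {0..1}" and U: "openin Y U"
  have U': "openin X {y \<in> topspace X. f y \<in> U}" using openin_continuous_map_preimage[OF f U] .
  have "{x \<in> topspace T. restrict (f \<circ> h x) {0..1} ` K \<subseteq> U} =
        {x \<in> topspace T. h x ` K \<subseteq> {y \<in> topspace X. f y \<in> U}}"
  proof -
    have "restrict (f \<circ> h x) {0..1} ` K \<subseteq> U \<longleftrightarrow> h x ` K \<subseteq> {y \<in> topspace X. f y \<in> U}"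
      if x: "x \<in> topspace T" for x
    proof -
      have "restrict (f \<circ> h x) {0..1} ` K = f ` h x ` K"
        using restrict_img[OF K(2), of "f \<circ> h x"] by (simp add: image_comp)
      then show ?thesis using paths_of_img[OF cont_from_PS(1)[OF h x] K(2)] by auto
    qed
    then show ?thesis by blast
  qed
  then show "openin T {x \<in> topspace T. restrict (f \<circ> h x) {0..1} ` K \<subseteq> U}"
    using cont_from_PS(2)[OF h K U'] by simp
qed

lemma cont_reverse:
  assumes h: "continuous_map T (path_space X) h"
  shows "continuous_map T (path_space X) (\<lambda>x. restrict (\<lambda>t. h x (1 - t)) {0..1})"
proof (rule cont_into_PS)
  fix x assume x: "x \<in> topspace T"
  have r: "continuous_map unit_interval_top unit_interval_top (\<lambda>t::real. 1 - t)"
    by (rule cont_real_I) (auto intro!: continuous_intros)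
  show "restrict (\<lambda>t. h x (1 - t)) {0..1} \<in> paths_of X"
    using paths_ofI continuous_map_compose[OF r paths_of_D[OF cont_from_PS(1)[OF h x]]]
    by (simp add: o_def)
next
  fix K :: "real set" and U assume K: "compact K" "K \<subseteq> {0..1}" and U: "openin X U"
  let ?K = "(\<lambda>t::real. 1 - t) ` K"
  have K': "compact ?K" "?K \<subseteq> {0..1}" using K
    by (auto intro!: compact_continuous_image continuous_intros)
  have "{x \<in> topspace T. restrict (\<lambda>t. h x (1 - t)) {0..1} ` K \<subseteq> U} =
        {x \<in> topspace T. h x ` ?K \<subseteq> U}"
    by (simp only: restrict_img[OF K(2)] image_image)
  then show "openin T {x \<in> topspace T. restrict (\<lambda>t. h x (1 - t)) {0..1} ` K \<subseteq> U}"
    using cont_from_PS(2)[OF h K' U] by simp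
qed

definition jn :: "(real \<Rightarrow> 'a) \<Rightarrow> (real \<Rightarrow> 'a) \<Rightarrow> real \<Rightarrow> 'a" where
  "jn g1 g2 = (\<lambda>t. if t \<le> 1/2 then g1 (2 * t) else g2 (2 * t - 1))"

lemma jn_cont:
  assumes g1: "continuous_map unit_interval_top X g1" and g2: "continuous_map unit_interval_top X g2"
    and e: "g1 1 = g2 0"
  shows "continuous_map unit_interval_top X (jn g1 g2)"
  unfolding jn_def
proof (rule continuous_map_cases_le)
  show "continuous_map unit_interval_top euclideanreal (\<lambda>t. t)"
    by (simp add: continuous_map_from_subtopology)
  show "continuous_map unit_interval_top euclideanreal (\<lambda>t. 1/2)" by simp
  have e1: "{x \<in> topspace unit_interval_top. x \<le> 1 / 2} = {0..1/2::real}" by (force simp: set_eq_iff)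
  have s1: "subtopology unit_interval_top {x \<in> topspace unit_interval_top. x \<le> 1 / 2} = top_of_set ({0..1} \<inter> {0..1/2})"
    by (simp only: subtopology_subtopology e1)
  have a: "continuous_map (top_of_set ({0..1} \<inter> {0..1/2})) unit_interval_top (\<lambda>t::real. 2 * t)"
    by (rule cont_real_I) (auto intro!: continuous_intros)
  show "continuous_map (subtopology unit_interval_top {x \<in> topspace unit_interval_top. x \<le> 1 / 2}) X (\<lambda>t. g1 (2 * t))"
    unfolding s1 using continuous_map_compose[OF a g1] by (simp add: o_def)
  have e2: "{x \<in> topspace unit_interval_top. 1/2 \<le> x} = {1/2..1::real}" by (force simp: set_eq_iff)
  have s2: "subtopology unit_interval_top {x \<in> topspace unit_interval_top. 1/2 \<le> x} = top_of_set ({0..1} \<inter> {1/2..1})"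
    by (simp only: subtopology_subtopology e2)
  have b: "continuous_map (top_of_set ({0..1} \<inter> {1/2..1})) unit_interval_top (\<lambda>t::real. 2 * t - 1)"
    by (rule cont_real_I) (auto intro!: continuous_intros)
  show "continuous_map (subtopology unit_interval_top {x \<in> topspace unit_interval_top. 1/2 \<le> x}) X (\<lambda>t. g2 (2 * t - 1))"
    unfolding s2 using continuous_map_compose[OF b g2] by (simp add: o_def)
  show "\<And>x. x \<in> topspace unit_interval_top \<Longrightarrow> x = 1 / 2 \<Longrightarrow> g1 (2 * x) = g2 (2 * x - 1)"
    using e by (simp add: mult.commute)
qed



lemma jn_img_iff:
  assumes K: "K \<subseteq> {0..1}" and e: "g1 1 = g2 0"
  shows "jn g1 g2 ` K \<subseteq> U \<longleftrightarrow>
     g1 ` ((\<lambda>t::real. 2 * t) ` (K \<inter> {0..1/2})) \<subseteq> U \<and> g2 ` ((\<lambda>t::real. 2 * t - 1) ` (K \<inter> {1/2..1})) \<subseteq> U"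
proof
  assume A: "jn g1 g2 ` K \<subseteq> U"
  have "g1 (2 * t) \<in> U" if "t \<in> K" "t \<le> 1/2" for t
  proof -
    have "jn g1 g2 t \<in> U" using A that(1) by blast
    moreover have "jn g1 g2 t = g1 (2 * t)" using that(2) by (simp add: jn_def)
    ultimately show ?thesis by simp
  qed
  moreover have "g2 (2 * t - 1) \<in> U" if "t \<in> K" "1/2 \<le> t" for t
  proof -
    have "jn g1 g2 t \<in> U" using A that(1) by blast
    moreover have "jn g1 g2 t = g2 (2 * t - 1)"
    proof (cases "t = 1/2")
      case True show ?thesis using e by (simp add: jn_def True)
    next
      case False then show ?thesis using that(2) by (simp add: jn_def)
    qed
    ultimately show ?thesis by simp
  qed
  ultimately show "g1 ` ((\<lambda>t::real. 2 * t) ` (K \<inter> {0..1/2})) \<subseteq> U \<and> g2 ` ((\<lambda>t::real. 2 * t - 1) ` (K \<inter> {1/2..1})) \<subseteq> U"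
    by auto
next
  assume B: "g1 ` ((\<lambda>t::real. 2 * t) ` (K \<inter> {0..1/2})) \<subseteq> U \<and> g2 ` ((\<lambda>t::real. 2 * t - 1) ` (K \<inter> {1/2..1})) \<subseteq> U"
  show "jn g1 g2 ` K \<subseteq> U"
  proof
    fix y assume "y \<in> jn g1 g2 ` K"
    then obtain t where t: "t \<in> K" "y = jn g1 g2 t" by blast
    have t01: "0 \<le> t" "t \<le> 1" using t(1) K by auto
    show "y \<in> U"
    proof (cases "t \<le> 1/2")
      case True
      then have "t \<in> K \<inter> {0..1/2}" using t t01 by auto
      then have "g1 (2 * t) \<in> U" using B by blast
      then show ?thesis using t(2) True by (simp add: jn_def)
    next
      case False
      then have "t \<in> K \<inter> {1/2..1}" using t t01 by auto
      then have "g2 (2 * t - 1) \<in> U" using B by blast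
      then show ?thesis using t(2) False by (simp add: jn_def)
    qed
  qed
qed

lemma cont_join:
  assumes h1: "continuous_map T (path_space X) h1" and h2: "continuous_map T (path_space X) h2"
    and e: "\<And>x. x \<in> topspace T \<Longrightarrow> h1 x 1 = h2 x 0"
  shows "continuous_map T (path_space X) (\<lambda>x. restrict (jn (h1 x) (h2 x)) {0..1})"
proof (rule cont_into_PS)
  fix x assume x: "x \<in> topspace T"
  show "restrict (jn (h1 x) (h2 x)) {0..1} \<in> paths_of X"
    by (rule paths_ofI, rule jn_cont[OF paths_of_D[OF cont_from_PS(1)[OF h1 x]]
          paths_of_D[OF cont_from_PS(1)[OF h2 x]] e[OF x]])
next
  fix K :: "real set" and U assume K: "compact K" "K \<subseteq> {0..1}" and U: "openin X U"
  define K1 where "K1 = (\<lambda>t::real. 2 * t) ` (K \<inter> {0..1/2})"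
  define K2 where "K2 = (\<lambda>t::real. 2 * t - 1) ` (K \<inter> {1/2..1})"
  have K1: "compact K1" "K1 \<subseteq> {0..1}" unfolding K1_def using K
    by (auto intro!: compact_continuous_image continuous_intros compact_Int_closed)
  have K2: "compact K2" "K2 \<subseteq> {0..1}" unfolding K2_def using K
    by (auto intro!: compact_continuous_image continuous_intros compact_Int_closed)
  have eq: "restrict (jn (h1 x) (h2 x)) {0..1} ` K \<subseteq> U \<longleftrightarrow> h1 x ` K1 \<subseteq> U \<and> h2 x ` K2 \<subseteq> U"
    if x: "x \<in> topspace T" for x
  proof -
    have r: "restrict (jn (h1 x) (h2 x)) {0..1} ` K = jn (h1 x) (h2 x) ` K" by (rule restrict_img[OF K(2)])
    show ?thesis unfolding r K1_def K2_def using jn_img_iff[where ?g1.0="h1 x" and ?g2.0="h2 x" and U=U, OF K(2) e[OF x]] .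
  qed
  have "{x \<in> topspace T. restrict (jn (h1 x) (h2 x)) {0..1} ` K \<subseteq> U} =
        {x \<in> topspace T. h1 x ` K1 \<subseteq> U} \<inter> {x \<in> topspace T. h2 x ` K2 \<subseteq> U}"
  proof (rule set_eqI)
    fix x
    show "x \<in> {x \<in> topspace T. restrict (jn (h1 x) (h2 x)) {0..1} ` K \<subseteq> U} \<longleftrightarrow>
        x \<in> {x \<in> topspace T. h1 x ` K1 \<subseteq> U} \<inter> {x \<in> topspace T. h2 x ` K2 \<subseteq> U}"
      by (cases "x \<in> topspace T") (simp_all only: mem_Collect_eq Int_iff eq simp_thms)
  qed
  then show "openin T {x \<in> topspace T. restrict (jn (h1 x) (h2 x)) {0..1} ` K \<subseteq> U}"
    using cont_from_PS(2)[OF h1 K1 U] cont_from_PS(2)[OF h2 K2 U] by (simp add: openin_Int)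
qed


lemma jn_0: "jn g1 g2 0 = g1 0" by (simp add: jn_def)
lemma jn_1: "jn g1 g2 1 = g2 1" by (simp add: jn_def)

lemma tcg_transfer:
  fixes X :: "'a topology" and Y :: "'b topology"
  assumes he: "X homotopy_equivalent_space Y" and tc: "tcg_cover X n"
  shows "tcg_cover Y n"
proof -
  obtain f g where f: "continuous_map X Y f" and g: "continuous_map Y X g"
    and hom: "homotopic_with (\<lambda>x. True) Y Y (f \<circ> g) id"
    using he unfolding homotopy_equivalent_space_def by blast
  obtain H where H: "continuous_map (prod_topology unit_interval_top Y) Y H"
    and H0: "\<And>x. H(0,x) = f (g x)" and H1: "\<And>x. H(1,x) = x"
    using hom unfolding homotopic_with_def by auto
  obtain A where A: "(\<Union>i\<le>n. A i) = topspace X \<times> topspace X"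
    and As: "\<And>i. i \<le> n \<Longrightarrow> has_local_section X (A i)"
    using tc unfolding tcg_cover_def by blast
  define B where "B i = {z \<in> topspace Y \<times> topspace Y. (g (fst z), g (snd z)) \<in> A i}" for i
  define kp where "kp y = restrict (\<lambda>t. H(t,y)) {0..1}" for y
  have kp: "continuous_map Y (path_space Y) kp"
    unfolding kp_def by (rule cont_curry[OF H])
  have gimg: "g y \<in> topspace X" if "y \<in> topspace Y" for y
    using g that by (meson continuous_map_image_subset_topspace image_subset_iff)
  show ?thesis unfolding tcg_cover_def
  proof (intro exI conjI allI impI)
    show "(\<Union>i\<le>n. B i) = topspace Y \<times> topspace Y"
    proof
      show "(\<Union>i\<le>n. B i) \<subseteq> topspace Y \<times> topspace Y" unfolding B_def by auto
      show "topspace Y \<times> topspace Y \<subseteq> (\<Union>i\<le>n. B i)"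
      proof
        fix z assume z: "z \<in> topspace Y \<times> topspace Y"
        then have "(g (fst z), g (snd z)) \<in> topspace X \<times> topspace X" using gimg by auto
        then obtain i where "i \<le> n" "(g (fst z), g (snd z)) \<in> A i" using A by blast
        then show "z \<in> (\<Union>i\<le>n. B i)" using z unfolding B_def by blast
      qed
    qed
  next
    fix i assume i: "i \<le> n"
    obtain s where s: "continuous_map (subtopology (prod_topology X X) (A i)) (path_space X) s"
      and se: "\<And>a. a \<in> A i \<Longrightarrow> endpoints (s a) = a"
      using As[OF i] unfolding has_local_section_def by blast
    define Z where "Z = subtopology (prod_topology Y Y) (B i)"
    have tsZ: "topspace Z = B i" unfolding Z_def B_def by auto
    have gg0: "continuous_map (prod_topology Y Y) (prod_topology X X) (\<lambda>z. (g (fst z), g (snd z)))"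
      by (intro continuous_map_pairedI continuous_map_compose[OF continuous_map_fst g, unfolded o_def]
            continuous_map_compose[OF continuous_map_snd g, unfolded o_def])
    have gg: "continuous_map Z (subtopology (prod_topology X X) (A i)) (\<lambda>z. (g (fst z), g (snd z)))"
      unfolding continuous_map_in_subtopology
    proof
      show "continuous_map Z (prod_topology X X) (\<lambda>z. (g (fst z), g (snd z)))"
        unfolding Z_def by (rule continuous_map_from_subtopology[OF gg0])
      show "(\<lambda>z. (g (fst z), g (snd z))) \<in> topspace Z \<rightarrow> A i" unfolding tsZ B_def by auto
    qed
    have sg: "continuous_map Z (path_space X) (\<lambda>z. s (g (fst z), g (snd z)))"
      using continuous_map_compose[OF gg s] by (simp add: o_def)
    have kf: "continuous_map Z (path_space Y) (\<lambda>z. kp (fst z))"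
    proof -
      have "continuous_map (prod_topology Y Y) (path_space Y) (\<lambda>z. kp (fst z))"
        using continuous_map_compose[OF continuous_map_fst kp] by (simp add: o_def)
      then show ?thesis unfolding Z_def by (rule continuous_map_from_subtopology)
    qed
    have ks: "continuous_map Z (path_space Y) (\<lambda>z. kp (snd z))"
    proof -
      have "continuous_map (prod_topology Y Y) (path_space Y) (\<lambda>z. kp (snd z))"
        using continuous_map_compose[OF continuous_map_snd kp] by (simp add: o_def)
      then show ?thesis unfolding Z_def by (rule continuous_map_from_subtopology)
    qed
    define p1 :: "'b \<times> 'b \<Rightarrow> real \<Rightarrow> 'b" where "p1 z = restrict (\<lambda>t. kp (fst z) (1 - t)) {0..1}" for z
    define p2 :: "'b \<times> 'b \<Rightarrow> real \<Rightarrow> 'b" where "p2 z = restrict (f \<circ> s (g (fst z), g (snd z))) {0..1}" for z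
    define p3 :: "'b \<times> 'b \<Rightarrow> real \<Rightarrow> 'b" where "p3 z = kp (snd z)" for z
    define q :: "'b \<times> 'b \<Rightarrow> real \<Rightarrow> 'b" where "q z = restrict (jn (p2 z) (p3 z)) {0..1}" for z
    define r :: "'b \<times> 'b \<Rightarrow> real \<Rightarrow> 'b" where "r z = restrict (jn (p1 z) (q z)) {0..1}" for z
    have c1: "continuous_map Z (path_space Y) p1"
      unfolding p1_def by (rule cont_reverse[OF kf])
    have c2: "continuous_map Z (path_space Y) p2"
      unfolding p2_def by (rule cont_postcomp[OF sg f])
    have c3: "continuous_map Z (path_space Y) p3"
      unfolding p3_def by (rule ks)
    have sgE: "s (g (fst z), g (snd z)) 0 = g (fst z)" "s (g (fst z), g (snd z)) 1 = g (snd z)"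
      if "z \<in> topspace Z" for z
      using se[of "(g (fst z), g (snd z))"] that unfolding tsZ B_def endpoints_def by auto
    have e23: "p2 z 1 = p3 z 0" if "z \<in> topspace Z" for z
      using sgE[OF that] by (simp add: p2_def p3_def kp_def H0)
    have cq: "continuous_map Z (path_space Y) q"
      unfolding q_def by (rule cont_join[OF c2 c3 e23])
    have e1q: "p1 z 1 = q z 0" if "z \<in> topspace Z" for z
      using sgE[OF that] by (simp add: p1_def p2_def q_def kp_def H0 jn_0)
    have cr: "continuous_map Z (path_space Y) r"
      unfolding r_def by (rule cont_join[OF c1 cq e1q])
    have "endpoints (r a) = a" if "a \<in> B i" for a
      by (simp add: endpoints_def r_def q_def p1_def p3_def kp_def jn_0 jn_1 H1)
    then show "has_local_section Y (B i)"
      unfolding has_local_section_def using cr Z_def by blast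
  qed
qed

theorem mainTheorem3:
  fixes X :: "'a topology" and X' :: "'b topology"
  assumes "X homotopy_equivalent_space X'"
  shows "TC_g X = TC_g X'"
proof -
  have "tcg_cover X = tcg_cover X'"
  proof
    fix n
    show "tcg_cover X n = tcg_cover X' n"
      using tcg_transfer[OF assms] tcg_transfer[OF homotopy_equivalent_space_sym[THEN iffD1, OF assms]] by blast
  qed
  then show ?thesis by (simp add: TC_g_def)
qed

end
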